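(* For any integer number $q\geq 3$ the group $B_3/[B_3[3], B_3[3]](q)$ is finite.
   Context: $B_3$ is the braid group on $3$ strands with standard generators $\sigma_1,\sigma_2$. $B_3[3]$ is the level $3$ congruence subgroup, i.e. the kernel of the mod $3$ reduction $\rho_3\colon B_3\to \mathrm{Sp}_2(\mathbb{Z}/3\mathbb{Z})$ of the symplectic representation obtained by specializing the Burau representation at $t=-1$; $[B_3[3],B_3[3]]$ is its commutator subgroup. For a positive integer $q$, $B_3/[B_3[3], B_3[3]](q)$ denotes the Coxeter-type quotient of $B_3/[B_3[3], B_3[3]]$ obtained by adding the relations $\sigma_1^q=\sigma_2^q=1$. *)

theory Defs
  imports "HOL-Algebra.Group"
begin

text \<open>Braid group B_3 given by words in sigma_1, sigma_2 and their inverses.\<close>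

datatype gen = S1 | S2

type_synonym letter = "gen \<times> bool"   \<comment> \<open>(generator, is_inverse)\<close>
type_synonym word = "letter list"

definition inv_letter :: "letter \<Rightarrow> letter" where
  "inv_letter a = (fst a, \<not> snd a)"

definition inv_word :: "word \<Rightarrow> word" where
  "inv_word w = rev (map inv_letter w)"

text \<open>2x2 matrices over Z/3Z, entries (a,b,c,d) = [[a,b],[c,d]], reduced mod 3.\<close>
type_synonym mat3 = "int \<times> int \<times> int \<times> int"

fun mmul3 :: "mat3 \<Rightarrow> mat3 \<Rightarrow> mat3" where
  "mmul3 (a,b,c,d) (e,f,g,h) =
     ((a*e + b*g) mod 3, (a*f + b*h) mod 3, (c*e + d*g) mod 3, (c*f + d*h) mod 3)"

text \<open>Reduced Burau representation at t = -1, reduced mod 3: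
  sigma_1 \<mapsto> [[1,1],[0,1]], sigma_2 \<mapsto> [[1,0],[-1,1]].\<close>
fun rho3_letter :: "letter \<Rightarrow> mat3" where
  "rho3_letter (S1, False) = (1, 1, 0, 1)"
| "rho3_letter (S1, True)  = (1, 2, 0, 1)"
| "rho3_letter (S2, False) = (1, 0, 2, 1)"
| "rho3_letter (S2, True)  = (1, 0, 1, 1)"

fun rho3 :: "word \<Rightarrow> mat3" where
  "rho3 [] = (1, 0, 0, 1)"
| "rho3 (x # w) = mmul3 (rho3_letter x) (rho3 w)"

text \<open>Congruence on words defining B_3 / [B_3[3],B_3[3]] with sigma_i^q = 1.\<close>
inductive quot_rel :: "nat \<Rightarrow> word \<Rightarrow> word \<Rightarrow> bool" for q :: nat where
  refl: "quot_rel q u u"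
| sym: "quot_rel q u v \<Longrightarrow> quot_rel q v u"
| trans: "quot_rel q u v \<Longrightarrow> quot_rel q v w \<Longrightarrow> quot_rel q u w"
| cong: "quot_rel q u v \<Longrightarrow> quot_rel q (x @ u @ y) (x @ v @ y)"
| cancel: "quot_rel q [a, inv_letter a] []"
| braid: "quot_rel q [(S1,False),(S2,False),(S1,False)] [(S2,False),(S1,False),(S2,False)]"
| power: "quot_rel q (replicate q (g, False)) []"
| comm: "rho3 u = (1,0,0,1) \<Longrightarrow> rho3 v = (1,0,0,1) \<Longrightarrow>
           quot_rel q (u @ v @ inv_word u @ inv_word v) []"

definition quot_relation :: "nat \<Rightarrow> (word \<times> word) set" where
  "quot_relation q = {(u, v). quot_rel q u v}"

definition B3_quot :: "nat \<Rightarrow> word set monoid" where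
  "B3_quot q = \<lparr> carrier = UNIV // quot_relation q,
      mult = (\<lambda>X Y. \<Union>x\<in>X. \<Union>y\<in>Y. quot_relation q `` {x @ y}),
      one = quot_relation q `` {[]} \<rparr>"

end

theory Submission
  imports Defs
begin


lemma mod3_h: "(i * (u mod 3) + k * (v mod 3)) mod (3::int) = (i*u + k*v) mod 3"
  by (metis mod_add_eq mod_mult_right_eq)
lemma mod3_h2: "((u mod 3) * i + (v mod 3) * k) mod (3::int) = (u*i + v*k) mod 3"
  by (metis mod_add_eq mod_mult_left_eq)
lemma mmul3_assoc: "mmul3 (mmul3 x y) z = mmul3 x (mmul3 y z)"
proof -
  obtain a b c d where x: "x = (a,b,c,d)" by (cases x) auto
  obtain e f g h where y: "y = (e,f,g,h)" by (cases y) auto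
  obtain i j k l where z: "z = (i,j,k,l)" by (cases z) auto
  show ?thesis unfolding x y z
    apply (simp only: mmul3.simps mod3_h mod3_h2)
    apply (simp add: algebra_simps)
    done
qed

definition red3 :: "mat3 \<Rightarrow> bool" where
  "red3 m \<longleftrightarrow> (case m of (a,b,c,d) \<Rightarrow> a mod 3 = a \<and> b mod 3 = b \<and> c mod 3 = c \<and> d mod 3 = d)"

lemma red3_mmul3: "red3 (mmul3 x y)"
  by (cases x; cases y) (simp add: red3_def)

lemma red3_rho3: "red3 (rho3 w)"
  by (cases w) (simp add: red3_def, simp add: red3_mmul3)

lemma mmul3_I_left: "red3 m \<Longrightarrow> mmul3 (1,0,0,1) m = m"
  by (cases m) (simp add: red3_def)

lemma mmul3_I_right: "red3 m \<Longrightarrow> mmul3 m (1,0,0,1) = m"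
  by (cases m) (simp add: red3_def)

lemma rho3_app: "rho3 (u @ v) = mmul3 (rho3 u) (rho3 v)"
  by (induction u) (simp_all add: mmul3_I_left red3_rho3 mmul3_assoc)

lemma inv_letter_inv[simp]: "inv_letter (inv_letter a) = a"
  by (simp add: inv_letter_def)

lemma inv_word_Nil[simp]: "inv_word [] = []" by (simp add: inv_word_def)
lemma inv_word_Cons: "inv_word (a#x) = inv_word x @ [inv_letter a]" by (simp add: inv_word_def)
lemma inv_word_app: "inv_word (x@y) = inv_word y @ inv_word x" by (simp add: inv_word_def)
lemma inv_inv[simp]: "inv_word (inv_word x) = x" by (simp add: inv_word_def rev_map comp_def)

lemma rho3_letter_inv: "mmul3 (rho3_letter a) (rho3_letter (inv_letter a)) = (1,0,0,1)"
  by (cases a; rename_tac g b; case_tac g; case_tac b) (simp_all add: inv_letter_def)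

lemma rho3_rinv_gen: "rho3 (x @ inv_word x @ z) = rho3 z"
proof (induction x arbitrary: z)
  case Nil then show ?case by simp
next
  case (Cons a x)
  have "rho3 ((a # x) @ inv_word (a # x) @ z) = mmul3 (rho3_letter a) (rho3 (x @ inv_word x @ ([inv_letter a] @ z)))"
    by (simp add: inv_word_Cons)
  also have "\<dots> = mmul3 (rho3_letter a) (mmul3 (rho3_letter (inv_letter a)) (rho3 z))"
    using Cons.IH by simp
  also have "\<dots> = rho3 z" by (simp add: mmul3_assoc[symmetric] rho3_letter_inv mmul3_I_left red3_rho3)
  finally show ?case .
qed

lemma rho3_rinv: "rho3 (x @ inv_word x) = (1,0,0,1)"
  using rho3_rinv_gen[of x "[]"] by simp

lemma Q_cong_l: "quot_rel q u v \<Longrightarrow> quot_rel q (x@u) (x@v)"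
  using quot_rel.cong[of q u v x "[]"] by simp
lemma Q_cong_r: "quot_rel q u v \<Longrightarrow> quot_rel q (u@y) (v@y)"
  using quot_rel.cong[of q u v "[]" y] by simp
lemma Q_app: "quot_rel q u u' \<Longrightarrow> quot_rel q v v' \<Longrightarrow> quot_rel q (u@v) (u'@v')"
  by (meson Q_cong_l Q_cong_r quot_rel.trans)

lemmas Q_trans[trans] = quot_rel.trans

lemma Q_rinv: "quot_rel q (x @ inv_word x) []"
proof (induction x)
  case Nil show ?case by (simp add: quot_rel.refl)
next
  case (Cons a x)
  have "quot_rel q ([a] @ (x @ inv_word x) @ [inv_letter a]) ([a] @ [] @ [inv_letter a])"
    by (rule quot_rel.cong[OF Cons.IH])
  then have "quot_rel q ((a#x) @ inv_word (a#x)) [a, inv_letter a]" by (simp add: inv_word_Cons)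
  then show ?case using quot_rel.cancel quot_rel.trans by blast
qed

lemma Q_linv: "quot_rel q (inv_word x @ x) []"
  using Q_rinv[of q "inv_word x"] by simp

lemma Q_del_r: "quot_rel q (x @ y @ inv_word y @ z) (x @ z)"
  using quot_rel.cong[OF Q_rinv[of q y], of x z] by simp
lemma Q_del_l: "quot_rel q (x @ inv_word y @ y @ z) (x @ z)"
  using quot_rel.cong[OF Q_linv[of q y], of x z] by simp

lemma Q_comm:
  assumes "rho3 u = (1,0,0,1)" "rho3 v = (1,0,0,1)"
  shows "quot_rel q (u@v) (v@u)"
proof -
  have c: "quot_rel q (u @ v @ inv_word u @ inv_word v) []" by (rule quot_rel.comm[OF assms])
  have "quot_rel q ((u @ v @ inv_word u @ inv_word v) @ v @ u) ([] @ v @ u)" by (rule Q_cong_r[OF c])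
  moreover have "quot_rel q ((u @ v @ inv_word u @ inv_word v) @ v @ u) ((u @ v @ inv_word u) @ u)"
    using Q_del_l[of q "u @ v @ inv_word u" v u] by simp
  moreover have "quot_rel q ((u @ v @ inv_word u) @ u) ((u @ v) @ [])"
    using Q_del_l[of q "u @ v" u "[]"] by simp
  ultimately have "quot_rel q ([] @ v @ u) ((u @ v) @ [])"
    using quot_rel.sym quot_rel.trans by blast
  then show ?thesis using quot_rel.sym by simp
qed

definition pw :: "word \<Rightarrow> nat \<Rightarrow> word" where "pw h n = concat (replicate n h)"

lemma pw_0[simp]: "pw h 0 = []" by (simp add: pw_def)
lemma pw_Suc: "pw h (Suc n) = h @ pw h n" by (simp add: pw_def)
lemma pw_add: "pw h (m + n) = pw h m @ pw h n" by (simp add: pw_def replicate_add)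
lemma pw_Suc': "pw h (Suc n) = pw h n @ h" using pw_add[of h n 1] by (simp add: pw_def)
lemma rho3_pw: "rho3 h = (1,0,0,1) \<Longrightarrow> rho3 (pw h n) = (1,0,0,1)"
  by (induction n) (simp_all add: pw_Suc rho3_app)

lemma inv_word_pw: "inv_word (pw h n) = pw (inv_word h) n"
proof (induction n)
  case 0 then show ?case by simp
next
  case (Suc n)
  have "inv_word (pw h (Suc n)) = pw (inv_word h) n @ inv_word h"
    by (simp add: pw_Suc inv_word_app Suc.IH)
  also have "\<dots> = pw (inv_word h) (Suc n)" by (rule pw_Suc'[symmetric])
  finally show ?case .
qed

lemma Q_pw_app:
  assumes "rho3 x = (1,0,0,1)" "rho3 y = (1,0,0,1)"
  shows "quot_rel q (pw (x@y) n) (pw x n @ pw y n)"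
proof (induction n)
  case 0 then show ?case by (simp add: quot_rel.refl)
next
  case (Suc n)
  have "quot_rel q (pw (x@y) (Suc n)) ((x @ y) @ pw x n @ pw y n)"
    unfolding pw_Suc by (rule Q_cong_l[OF Suc.IH])
  also have "quot_rel q ((x @ y) @ pw x n @ pw y n) (x @ (y @ pw x n) @ pw y n)"
    by (simp add: quot_rel.refl)
  also have "quot_rel q (x @ (y @ pw x n) @ pw y n) (x @ (pw x n @ y) @ pw y n)"
    by (rule quot_rel.cong[OF Q_comm]) (simp_all add: assms rho3_pw)
  also have "(x @ (pw x n @ y) @ pw y n) = pw x (Suc n) @ pw y (Suc n)" by (simp add: pw_Suc)
  finally show ?case .
qed

lemma Q_pw_conj: "quot_rel q (pw (x @ h @ inv_word x) n) (x @ pw h n @ inv_word x)"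
proof (induction n)
  case 0 then show ?case using Q_rinv[of q x] by (simp add: quot_rel.sym)
next
  case (Suc n)
  have "quot_rel q (pw (x @ h @ inv_word x) (Suc n)) ((x @ h @ inv_word x) @ x @ pw h n @ inv_word x)"
    unfolding pw_Suc by (rule Q_cong_l[OF Suc.IH])
  also have "quot_rel q ((x @ h @ inv_word x) @ x @ pw h n @ inv_word x) ((x @ h) @ pw h n @ inv_word x)"
    using Q_del_l[of q "x @ h" x "pw h n @ inv_word x"] by simp
  finally show ?case by (simp add: pw_Suc)
qed

lemma Q_inv_nil: "quot_rel q u [] \<Longrightarrow> quot_rel q (inv_word u) []"
proof -
  assume a: "quot_rel q u []"
  have "quot_rel q (inv_word u @ u) (inv_word u @ [])" by (rule Q_cong_l[OF a])
  then show ?thesis using Q_linv[of q u] by (metis append_Nil2 quot_rel.sym quot_rel.trans)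
qed

lemma Q_pw_mod:
  assumes "quot_rel q (pw h q) []"
  shows "quot_rel q (pw h n) (pw h (n mod q))"
proof -
  have k: "quot_rel q (pw h (q * k)) []" for k
    by (induction k) (simp_all add: quot_rel.refl pw_add Q_app[OF assms, of _ "[]", simplified])
  have "pw h n = pw h (q * (n div q)) @ pw h (n mod q)"
    by (metis div_mult_mod_eq mult.commute pw_add)
  then show ?thesis using Q_cong_r[OF k, of "n div q" "pw h (n mod q)"] by simp
qed



definition Tq :: "nat \<Rightarrow> word \<Rightarrow> bool" where
  "Tq q h \<longleftrightarrow> rho3 h = (1,0,0,1) \<and> quot_rel q (pw h q) []"

definition Rq :: "nat \<Rightarrow> word \<Rightarrow> word \<Rightarrow> bool" where
  "Rq q u v \<longleftrightarrow> (\<exists>h. Tq q h \<and> quot_rel q u (h @ v))"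

lemma Tq_nil: "Tq q []"
  by (simp add: Tq_def pw_def quot_rel.refl)

lemma Tq_app: "Tq q h1 \<Longrightarrow> Tq q h2 \<Longrightarrow> Tq q (h1 @ h2)"
proof -
  assume a: "Tq q h1" "Tq q h2"
  have r: "rho3 (h1 @ h2) = (1,0,0,1)" using a by (simp add: Tq_def rho3_app mmul3_I_left red3_rho3)
  have "quot_rel q (pw (h1 @ h2) q) (pw h1 q @ pw h2 q)" using a by (intro Q_pw_app) (simp_all add: Tq_def)
  also have "quot_rel q (pw h1 q @ pw h2 q) ([] @ [])" using a by (intro Q_app) (simp_all add: Tq_def)
  finally show ?thesis using r by (simp add: Tq_def)
qed

lemma Tq_conj: "Tq q h \<Longrightarrow> Tq q (x @ h @ inv_word x)"
proof -
  assume a: "Tq q h"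
  have r: "rho3 (x @ h @ inv_word x) = (1,0,0,1)"
    using a by (simp add: Tq_def rho3_app mmul3_I_left red3_rho3 rho3_rinv[of x, unfolded rho3_app])
  have "quot_rel q (pw (x @ h @ inv_word x) q) (x @ pw h q @ inv_word x)" by (rule Q_pw_conj)
  also have "quot_rel q (x @ pw h q @ inv_word x) (x @ [] @ inv_word x)"
    using a unfolding Tq_def by (intro quot_rel.cong) simp
  also have "quot_rel q (x @ [] @ inv_word x) []" using Q_rinv by simp
  finally show ?thesis using r by (simp add: Tq_def)
qed

lemma Tq_inv: "Tq q h \<Longrightarrow> Tq q (inv_word h)"
proof -
  assume a: "Tq q h"
  have "rho3 (inv_word h) = mmul3 (rho3 h) (rho3 (inv_word h))"
    using a by (simp add: Tq_def mmul3_I_left red3_rho3)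
  also have "\<dots> = (1,0,0,1)" using rho3_rinv[of h] by (simp add: rho3_app)
  finally have r: "rho3 (inv_word h) = (1,0,0,1)" .
  have "quot_rel q (inv_word (pw h q)) []" using a Q_inv_nil by (simp add: Tq_def)
  then show ?thesis using r by (simp add: Tq_def inv_word_pw)
qed

lemma replicate3: "pw [x,x,x] n = replicate n x @ replicate n x @ replicate n x"
proof -
  have "pw [x,x,x] n = replicate (n+n+n) x" by (induction n) (simp_all add: pw_Suc)
  then show ?thesis by (simp add: replicate_add[symmetric])
qed

lemma Tq_cube: "Tq q [(g,False),(g,False),(g,False)]"
proof -
  have r: "rho3 [(g,False),(g,False),(g,False)] = (1,0,0,1)" by (cases g) simp_all
  have p: "quot_rel q (replicate q (g, False)) []" by (rule quot_rel.power)
  have "quot_rel q (pw [(g,False),(g,False),(g,False)] q) ([] @ [] @ [])"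
    unfolding replicate3 by (intro Q_app p)
  then show ?thesis using r by (simp add: Tq_def)
qed

lemma Rq_of_Q: "quot_rel q u v \<Longrightarrow> Rq q u v"
  unfolding Rq_def using Tq_nil by force

lemma Rq_trans[trans]: "Rq q u v \<Longrightarrow> Rq q v w \<Longrightarrow> Rq q u w"
proof -
  assume "Rq q u v" "Rq q v w"
  then obtain h1 h2 where h: "Tq q h1" "quot_rel q u (h1 @ v)" "Tq q h2" "quot_rel q v (h2 @ w)"
    unfolding Rq_def by blast
  have "quot_rel q u (h1 @ v)" by (rule h(2))
  also have "quot_rel q (h1 @ v) (h1 @ h2 @ w)" by (rule Q_cong_l[OF h(4)])
  finally have "quot_rel q u ((h1 @ h2) @ w)" by simp
  then show ?thesis unfolding Rq_def using Tq_app h by blast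
qed

lemma Rq_sym: "Rq q u v \<Longrightarrow> Rq q v u"
proof -
  assume "Rq q u v"
  then obtain h where h: "Tq q h" "quot_rel q u (h @ v)" unfolding Rq_def by blast
  have "quot_rel q (inv_word h @ u) (inv_word h @ h @ v)" using h Q_cong_l by blast
  moreover have "quot_rel q ([] @ inv_word h @ h @ v) ([] @ v)" by (rule Q_del_l)
  ultimately have "quot_rel q (inv_word h @ u) v" using Q_trans by simp
  then have "quot_rel q v (inv_word h @ u)" by (rule quot_rel.sym)
  then show ?thesis unfolding Rq_def using Tq_inv h by blast
qed

lemma Rq_cong_r: "Rq q u v \<Longrightarrow> Rq q (u @ y) (v @ y)"
  unfolding Rq_def using Q_cong_r by fastforce

lemma Rq_cong_l: "Rq q u v \<Longrightarrow> Rq q (x @ u) (x @ v)"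
proof -
  assume "Rq q u v"
  then obtain h where h: "Tq q h" "quot_rel q u (h @ v)" unfolding Rq_def by blast
  have "quot_rel q (x @ u) (x @ h @ v)" using h Q_cong_l by blast
  moreover have "quot_rel q ((x @ h) @ inv_word x @ x @ v) ((x @ h) @ v)" by (rule Q_del_l)
  then have "quot_rel q ((x @ h @ inv_word x) @ x @ v) (x @ h @ v)" by simp
  ultimately have "quot_rel q (x @ u) ((x @ h @ inv_word x) @ x @ v)" using quot_rel.sym Q_trans by blast
  then show ?thesis unfolding Rq_def using Tq_conj h by blast
qed

lemma Rq_cong: "Rq q u v \<Longrightarrow> Rq q (x @ u @ y) (x @ v @ y)"
  using Rq_cong_l Rq_cong_r by blast

lemma Rq_del: "Rq q (x @ [(g,False),(g,False),(g,False)] @ y) (x @ y)"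
proof -
  have "Rq q [(g,False),(g,False),(g,False)] []"
    unfolding Rq_def using Tq_cube quot_rel.refl by force
  from Rq_cong[OF this, of x y] show ?thesis by simp
qed

lemma Rq_ins: "Rq q (x @ y) (x @ [(g,False),(g,False),(g,False)] @ y)"
  using Rq_del Rq_sym by blast

lemma Rq_br1: "Rq q (x @ [(S1,False),(S2,False),(S1,False)] @ y) (x @ [(S2,False),(S1,False),(S2,False)] @ y)"
  using Rq_of_Q quot_rel.braid quot_rel.cong by blast

lemma Rq_br2: "Rq q (x @ [(S2,False),(S1,False),(S2,False)] @ y) (x @ [(S1,False),(S2,False),(S1,False)] @ y)"
  using Rq_br1 Rq_sym by blast

lemma Rq_invl: "Rq q (x @ [(g,True)]) (x @ [(g,False),(g,False)])"
proof -
  have "Rq q [(g,True)] ([(g,True)] @ [(g,False),(g,False),(g,False)] @ [])"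
    using Rq_ins[of q "[(g,True)]" "[]" g] by simp
  moreover have "quot_rel q ([] @ [(g,True), inv_letter (g,True)] @ [(g,False),(g,False)]) ([] @ [] @ [(g,False),(g,False)])"
    by (intro quot_rel.cong quot_rel.cancel)
  then have "quot_rel q ([(g,True)] @ [(g,False),(g,False),(g,False)] @ []) [(g,False),(g,False)]"
    by (simp add: inv_letter_def)
  ultimately have "Rq q [(g,True)] [(g,False),(g,False)]"
    using Rq_of_Q Rq_trans by blast
  then show ?thesis using Rq_cong_l by blast
qed


abbreviation sa :: letter where "sa \<equiv> (S1, False)"
abbreviation sb :: letter where "sb \<equiv> (S2, False)"
abbreviation sA :: letter where "sA \<equiv> (S1, True)"
abbreviation sB :: letter where "sB \<equiv> (S2, True)"

definition TL :: "(mat3 \<times> word) list" where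
  "TL = [((1,0,0,1), []),
    ((1,1,0,1), [sa]),
    ((1,0,2,1), [sb]),
    ((1,2,0,1), [sa, sa]),
    ((0,1,2,1), [sa, sb]),
    ((1,1,2,0), [sb, sa]),
    ((1,0,1,1), [sb, sb]),
    ((2,2,2,1), [sa, sa, sb]),
    ((0,1,2,0), [sa, sb, sa]),
    ((2,1,1,1), [sa, sb, sb]),
    ((1,2,2,2), [sb, sa, sa]),
    ((1,1,1,2), [sb, sb, sa]),
    ((2,1,2,0), [sa, sa, sb, sa]),
    ((0,2,1,1), [sa, sa, sb, sb]),
    ((0,1,2,2), [sa, sb, sa, sa]),
    ((2,0,1,2), [sa, sb, sb, sa]),
    ((2,2,0,2), [sb, sa, sa, sb]),
    ((1,2,1,0), [sb, sb, sa, sa]),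
    ((2,0,2,2), [sa, sa, sb, sa, sa]),
    ((0,2,1,2), [sa, sa, sb, sb, sa]),
    ((2,1,0,2), [sa, sb, sa, sa, sb]),
    ((2,2,1,0), [sa, sb, sb, sa, sa]),
    ((2,0,0,2), [sa, sa, sb, sa, sa, sb]),
    ((0,2,1,0), [sa, sa, sb, sb, sa, sa])]"

definition Tr :: "mat3 \<Rightarrow> word" where
  "Tr m = (case map_of TL m of Some w \<Rightarrow> w | None \<Rightarrow> [])"

definition M24 :: "mat3 set" where "M24 = set (map fst TL)"

lemma fact_0: "Rq q [sa] [sa]"
  by (rule Rq_of_Q[OF quot_rel.refl])

lemma fact_1: "Rq q [sb] [sb]"
  by (rule Rq_of_Q[OF quot_rel.refl])

lemma fact_2: "Rq q [sA] [sa, sa]"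
  using Rq_invl[where x="[]" and g=S1] by simp

lemma fact_3: "Rq q [sB] [sb, sb]"
  using Rq_invl[where x="[]" and g=S2] by simp

lemma fact_4: "Rq q [sa, sa] [sa, sa]"
  by (rule Rq_of_Q[OF quot_rel.refl])

lemma fact_5: "Rq q [sa, sb] [sa, sb]"
  by (rule Rq_of_Q[OF quot_rel.refl])

lemma fact_6: "Rq q [sa, sA] []"
proof -
  have "Rq q [sa, sA] [sa, sa, sa]" using Rq_invl[where x="[sa]" and g=S1] by simp
  also have "Rq q [sa, sa, sa] []" using Rq_del[where x="[]" and y="[]" and g=S1] by simp
  finally show ?thesis .
qed

lemma fact_7: "Rq q [sa, sB] [sa, sb, sb]"
  using Rq_invl[where x="[sa]" and g=S2] by simp

lemma fact_8: "Rq q [sb, sa] [sb, sa]"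
  by (rule Rq_of_Q[OF quot_rel.refl])

lemma fact_9: "Rq q [sb, sb] [sb, sb]"
  by (rule Rq_of_Q[OF quot_rel.refl])

lemma fact_10: "Rq q [sb, sA] [sb, sa, sa]"
  using Rq_invl[where x="[sb]" and g=S1] by simp

lemma fact_11: "Rq q [sb, sB] []"
proof -
  have "Rq q [sb, sB] [sb, sb, sb]" using Rq_invl[where x="[sb]" and g=S2] by simp
  also have "Rq q [sb, sb, sb] []" using Rq_del[where x="[]" and y="[]" and g=S2] by simp
  finally show ?thesis .
qed

lemma fact_12: "Rq q [sa, sa, sa] []"
  using Rq_del[where x="[]" and y="[]" and g=S1] by simp

lemma fact_13: "Rq q [sa, sa, sb] [sa, sa, sb]"
  by (rule Rq_of_Q[OF quot_rel.refl])

lemma fact_14: "Rq q [sa, sa, sA] [sa]"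
proof -
  have "Rq q [sa, sa, sA] [sa, sa, sa, sa]" using Rq_invl[where x="[sa, sa]" and g=S1] by simp
  also have "Rq q [sa, sa, sa, sa] [sa]" using Rq_del[where x="[]" and y="[sa]" and g=S1] by simp
  finally show ?thesis .
qed

lemma fact_15: "Rq q [sa, sa, sB] [sa, sa, sb, sb]"
  using Rq_invl[where x="[sa, sa]" and g=S2] by simp

lemma fact_16: "Rq q [sa, sb, sa] [sa, sb, sa]"
  by (rule Rq_of_Q[OF quot_rel.refl])

lemma fact_17: "Rq q [sa, sb, sb] [sa, sb, sb]"
  by (rule Rq_of_Q[OF quot_rel.refl])

lemma fact_18: "Rq q [sa, sb, sA] [sa, sb, sa, sa]"
  using Rq_invl[where x="[sa, sb]" and g=S1] by simp

lemma fact_19: "Rq q [sa, sb, sB] [sa]"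
proof -
  have "Rq q [sa, sb, sB] [sa, sb, sb, sb]" using Rq_invl[where x="[sa, sb]" and g=S2] by simp
  also have "Rq q [sa, sb, sb, sb] [sa]" using Rq_del[where x="[sa]" and y="[]" and g=S2] by simp
  finally show ?thesis .
qed

lemma fact_20: "Rq q [sb, sa, sa] [sb, sa, sa]"
  by (rule Rq_of_Q[OF quot_rel.refl])

lemma fact_21: "Rq q [sb, sa, sb] [sa, sb, sa]"
  using Rq_br2[where x="[]" and y="[]"] by simp

lemma fact_22: "Rq q [sb, sa, sA] [sb]"
proof -
  have "Rq q [sb, sa, sA] [sb, sa, sa, sa]" using Rq_invl[where x="[sb, sa]" and g=S1] by simp
  also have "Rq q [sb, sa, sa, sa] [sb]" using Rq_del[where x="[sb]" and y="[]" and g=S1] by simp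
  finally show ?thesis .
qed

lemma fact_23: "Rq q [sb, sa, sB] [sa, sa, sb, sa]"
proof -
  have "Rq q [sb, sa, sB] [sb, sa, sb, sb]" using Rq_invl[where x="[sb, sa]" and g=S2] by simp
  also have "Rq q [sb, sa, sb, sb] [sa, sb, sa, sb]" using Rq_br2[where x="[]" and y="[sb]"] by simp
  also have "Rq q [sa, sb, sa, sb] [sa, sa, sb, sa]" using Rq_br2[where x="[sa]" and y="[]"] by simp
  finally show ?thesis .
qed

lemma fact_24: "Rq q [sb, sb, sa] [sb, sb, sa]"
  by (rule Rq_of_Q[OF quot_rel.refl])

lemma fact_25: "Rq q [sb, sb, sb] []"
  using Rq_del[where x="[]" and y="[]" and g=S2] by simp

lemma fact_26: "Rq q [sb, sb, sA] [sb, sb, sa, sa]"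
  using Rq_invl[where x="[sb, sb]" and g=S1] by simp

lemma fact_27: "Rq q [sb, sb, sB] [sb]"
proof -
  have "Rq q [sb, sb, sB] [sb, sb, sb, sb]" using Rq_invl[where x="[sb, sb]" and g=S2] by simp
  also have "Rq q [sb, sb, sb, sb] [sb]" using Rq_del[where x="[]" and y="[sb]" and g=S2] by simp
  finally show ?thesis .
qed

lemma fact_28: "Rq q [sa, sa, sb, sa] [sa, sa, sb, sa]"
  by (rule Rq_of_Q[OF quot_rel.refl])

lemma fact_29: "Rq q [sa, sa, sb, sb] [sa, sa, sb, sb]"
  by (rule Rq_of_Q[OF quot_rel.refl])

lemma fact_30: "Rq q [sa, sa, sb, sA] [sa, sa, sb, sa, sa]"
  using Rq_invl[where x="[sa, sa, sb]" and g=S1] by simp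

lemma fact_31: "Rq q [sa, sa, sb, sB] [sa, sa]"
proof -
  have "Rq q [sa, sa, sb, sB] [sa, sa, sb, sb, sb]" using Rq_invl[where x="[sa, sa, sb]" and g=S2] by simp
  also have "Rq q [sa, sa, sb, sb, sb] [sa, sa]" using Rq_del[where x="[sa, sa]" and y="[]" and g=S2] by simp
  finally show ?thesis .
qed

lemma fact_32: "Rq q [sa, sb, sa, sa] [sa, sb, sa, sa]"
  by (rule Rq_of_Q[OF quot_rel.refl])

lemma fact_33: "Rq q [sa, sb, sa, sb] [sa, sa, sb, sa]"
  using Rq_br2[where x="[sa]" and y="[]"] by simp

lemma fact_34: "Rq q [sa, sb, sa, sA] [sa, sb]"
proof -
  have "Rq q [sa, sb, sa, sA] [sa, sb, sa, sa, sa]" using Rq_invl[where x="[sa, sb, sa]" and g=S1] by simp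
  also have "Rq q [sa, sb, sa, sa, sa] [sa, sb]" using Rq_del[where x="[sa, sb]" and y="[]" and g=S1] by simp
  finally show ?thesis .
qed

lemma fact_35: "Rq q [sa, sb, sa, sB] [sb, sa]"
proof -
  have "Rq q [sa, sb, sa, sB] [sa, sb, sa, sb, sb]" using Rq_invl[where x="[sa, sb, sa]" and g=S2] by simp
  also have "Rq q [sa, sb, sa, sb, sb] [sb, sa, sb, sb, sb]" using Rq_br1[where x="[]" and y="[sb, sb]"] by simp
  also have "Rq q [sb, sa, sb, sb, sb] [sb, sa]" using Rq_del[where x="[sb, sa]" and y="[]" and g=S2] by simp
  finally show ?thesis .
qed

lemma fact_36: "Rq q [sa, sb, sb, sa] [sa, sb, sb, sa]"
  by (rule Rq_of_Q[OF quot_rel.refl])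

lemma fact_37: "Rq q [sa, sb, sb, sb] [sa]"
  using Rq_del[where x="[sa]" and y="[]" and g=S2] by simp

lemma fact_38: "Rq q [sa, sb, sb, sA] [sa, sb, sb, sa, sa]"
  using Rq_invl[where x="[sa, sb, sb]" and g=S1] by simp

lemma fact_39: "Rq q [sa, sb, sb, sB] [sa, sb]"
proof -
  have "Rq q [sa, sb, sb, sB] [sa, sb, sb, sb, sb]" using Rq_invl[where x="[sa, sb, sb]" and g=S2] by simp
  also have "Rq q [sa, sb, sb, sb, sb] [sa, sb]" using Rq_del[where x="[sa]" and y="[sb]" and g=S2] by simp
  finally show ?thesis .
qed

lemma fact_40: "Rq q [sb, sa, sa, sa] [sb]"
  using Rq_del[where x="[sb]" and y="[]" and g=S1] by simp

lemma fact_41: "Rq q [sb, sa, sa, sb] [sb, sa, sa, sb]"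
  by (rule Rq_of_Q[OF quot_rel.refl])

lemma fact_42: "Rq q [sb, sa, sa, sA] [sb, sa]"
proof -
  have "Rq q [sb, sa, sa, sA] [sb, sa, sa, sa, sa]" using Rq_invl[where x="[sb, sa, sa]" and g=S1] by simp
  also have "Rq q [sb, sa, sa, sa, sa] [sb, sa]" using Rq_del[where x="[sb]" and y="[sa]" and g=S1] by simp
  finally show ?thesis .
qed

lemma fact_43: "Rq q [sb, sa, sa, sB] [sa, sa, sb, sb, sa]"
proof -
  have "Rq q [sb, sa, sa, sB] [sb, sa, sa, sb, sb]" using Rq_invl[where x="[sb, sa, sa]" and g=S2] by simp
  also have "Rq q [sb, sa, sa, sb, sb] [sa, sa, sa, sb, sa, sa, sb, sb]" using Rq_ins[where x="[]" and y="[sb, sa, sa, sb, sb]" and g=S1] by simp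
  also have "Rq q [sa, sa, sa, sb, sa, sa, sb, sb] [sa, sa, sb, sa, sb, sa, sb, sb]" using Rq_br1[where x="[sa, sa]" and y="[sa, sb, sb]"] by simp
  also have "Rq q [sa, sa, sb, sa, sb, sa, sb, sb] [sa, sa, sb, sb, sa, sb, sb, sb]" using Rq_br1[where x="[sa, sa, sb]" and y="[sb, sb]"] by simp
  also have "Rq q [sa, sa, sb, sb, sa, sb, sb, sb] [sa, sa, sb, sb, sa]" using Rq_del[where x="[sa, sa, sb, sb, sa]" and y="[]" and g=S2] by simp
  finally show ?thesis .
qed

lemma fact_44: "Rq q [sb, sb, sa, sa] [sb, sb, sa, sa]"
  by (rule Rq_of_Q[OF quot_rel.refl])

lemma fact_45: "Rq q [sb, sb, sa, sb] [sa, sb, sa, sa]"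
proof -
  have "Rq q [sb, sb, sa, sb] [sb, sa, sb, sa]" using Rq_br2[where x="[sb]" and y="[]"] by simp
  also have "Rq q [sb, sa, sb, sa] [sa, sb, sa, sa]" using Rq_br2[where x="[]" and y="[sa]"] by simp
  finally show ?thesis .
qed

lemma fact_46: "Rq q [sb, sb, sa, sA] [sb, sb]"
proof -
  have "Rq q [sb, sb, sa, sA] [sb, sb, sa, sa, sa]" using Rq_invl[where x="[sb, sb, sa]" and g=S1] by simp
  also have "Rq q [sb, sb, sa, sa, sa] [sb, sb]" using Rq_del[where x="[sb, sb]" and y="[]" and g=S1] by simp
  finally show ?thesis .
qed

lemma fact_47: "Rq q [sb, sb, sa, sB] [sa, sb, sa, sa, sb]"
proof -
  have "Rq q [sb, sb, sa, sB] [sb, sb, sa, sb, sb]" using Rq_invl[where x="[sb, sb, sa]" and g=S2] by simp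
  also have "Rq q [sb, sb, sa, sb, sb] [sb, sa, sb, sa, sb]" using Rq_br2[where x="[sb]" and y="[sb]"] by simp
  also have "Rq q [sb, sa, sb, sa, sb] [sa, sb, sa, sa, sb]" using Rq_br2[where x="[]" and y="[sa, sb]"] by simp
  finally show ?thesis .
qed

lemma fact_48: "Rq q [sa, sa, sb, sa, sa] [sa, sa, sb, sa, sa]"
  by (rule Rq_of_Q[OF quot_rel.refl])

lemma fact_49: "Rq q [sa, sa, sb, sa, sb] [sb, sa]"
proof -
  have "Rq q [sa, sa, sb, sa, sb] [sa, sa, sa, sb, sa]" using Rq_br2[where x="[sa, sa]" and y="[]"] by simp
  also have "Rq q [sa, sa, sa, sb, sa] [sb, sa]" using Rq_del[where x="[]" and y="[sb, sa]" and g=S1] by simp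
  finally show ?thesis .
qed

lemma fact_50: "Rq q [sa, sa, sb, sa, sA] [sa, sa, sb]"
proof -
  have "Rq q [sa, sa, sb, sa, sA] [sa, sa, sb, sa, sa, sa]" using Rq_invl[where x="[sa, sa, sb, sa]" and g=S1] by simp
  also have "Rq q [sa, sa, sb, sa, sa, sa] [sa, sa, sb]" using Rq_del[where x="[sa, sa, sb]" and y="[]" and g=S1] by simp
  finally show ?thesis .
qed

lemma fact_51: "Rq q [sa, sa, sb, sa, sB] [sa, sb, sa]"
proof -
  have "Rq q [sa, sa, sb, sa, sB] [sa, sa, sb, sa, sb, sb]" using Rq_invl[where x="[sa, sa, sb, sa]" and g=S2] by simp
  also have "Rq q [sa, sa, sb, sa, sb, sb] [sa, sb, sa, sb, sb, sb]" using Rq_br1[where x="[sa]" and y="[sb, sb]"] by simp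
  also have "Rq q [sa, sb, sa, sb, sb, sb] [sa, sb, sa]" using Rq_del[where x="[sa, sb, sa]" and y="[]" and g=S2] by simp
  finally show ?thesis .
qed

lemma fact_52: "Rq q [sa, sa, sb, sb, sa] [sa, sa, sb, sb, sa]"
  by (rule Rq_of_Q[OF quot_rel.refl])

lemma fact_53: "Rq q [sa, sa, sb, sb, sb] [sa, sa]"
  using Rq_del[where x="[sa, sa]" and y="[]" and g=S2] by simp

lemma fact_54: "Rq q [sa, sa, sb, sb, sA] [sa, sa, sb, sb, sa, sa]"
  using Rq_invl[where x="[sa, sa, sb, sb]" and g=S1] by simp

lemma fact_55: "Rq q [sa, sa, sb, sb, sB] [sa, sa, sb]"
proof -
  have "Rq q [sa, sa, sb, sb, sB] [sa, sa, sb, sb, sb, sb]" using Rq_invl[where x="[sa, sa, sb, sb]" and g=S2] by simp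
  also have "Rq q [sa, sa, sb, sb, sb, sb] [sa, sa, sb]" using Rq_del[where x="[sa, sa]" and y="[sb]" and g=S2] by simp
  finally show ?thesis .
qed

lemma fact_56: "Rq q [sa, sb, sa, sa, sa] [sa, sb]"
  using Rq_del[where x="[sa, sb]" and y="[]" and g=S1] by simp

lemma fact_57: "Rq q [sa, sb, sa, sa, sb] [sa, sb, sa, sa, sb]"
  by (rule Rq_of_Q[OF quot_rel.refl])

lemma fact_58: "Rq q [sa, sb, sa, sa, sA] [sa, sb, sa]"
proof -
  have "Rq q [sa, sb, sa, sa, sA] [sa, sb, sa, sa, sa, sa]" using Rq_invl[where x="[sa, sb, sa, sa]" and g=S1] by simp
  also have "Rq q [sa, sb, sa, sa, sa, sa] [sa, sb, sa]" using Rq_del[where x="[sa, sb]" and y="[sa]" and g=S1] by simp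
  finally show ?thesis .
qed

lemma fact_59: "Rq q [sa, sb, sa, sa, sB] [sb, sb, sa]"
proof -
  have "Rq q [sa, sb, sa, sa, sB] [sa, sb, sa, sa, sb, sb]" using Rq_invl[where x="[sa, sb, sa, sa]" and g=S2] by simp
  also have "Rq q [sa, sb, sa, sa, sb, sb] [sb, sa, sb, sa, sb, sb]" using Rq_br1[where x="[]" and y="[sa, sb, sb]"] by simp
  also have "Rq q [sb, sa, sb, sa, sb, sb] [sb, sb, sa, sb, sb, sb]" using Rq_br1[where x="[sb]" and y="[sb, sb]"] by simp
  also have "Rq q [sb, sb, sa, sb, sb, sb] [sb, sb, sa]" using Rq_del[where x="[sb, sb, sa]" and y="[]" and g=S2] by simp
  finally show ?thesis .
qed

lemma fact_60: "Rq q [sa, sb, sb, sa, sa] [sa, sb, sb, sa, sa]"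
  by (rule Rq_of_Q[OF quot_rel.refl])

lemma fact_61: "Rq q [sa, sb, sb, sa, sb] [sa, sa, sb, sa, sa]"
proof -
  have "Rq q [sa, sb, sb, sa, sb] [sa, sb, sa, sb, sa]" using Rq_br2[where x="[sa, sb]" and y="[]"] by simp
  also have "Rq q [sa, sb, sa, sb, sa] [sa, sa, sb, sa, sa]" using Rq_br2[where x="[sa]" and y="[sa]"] by simp
  finally show ?thesis .
qed

lemma fact_62: "Rq q [sa, sb, sb, sa, sA] [sa, sb, sb]"
proof -
  have "Rq q [sa, sb, sb, sa, sA] [sa, sb, sb, sa, sa, sa]" using Rq_invl[where x="[sa, sb, sb, sa]" and g=S1] by simp
  also have "Rq q [sa, sb, sb, sa, sa, sa] [sa, sb, sb]" using Rq_del[where x="[sa, sb, sb]" and y="[]" and g=S1] by simp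
  finally show ?thesis .
qed

lemma fact_63: "Rq q [sa, sb, sb, sa, sB] [sa, sa, sb, sa, sa, sb]"
proof -
  have "Rq q [sa, sb, sb, sa, sB] [sa, sb, sb, sa, sb, sb]" using Rq_invl[where x="[sa, sb, sb, sa]" and g=S2] by simp
  also have "Rq q [sa, sb, sb, sa, sb, sb] [sa, sb, sa, sb, sa, sb]" using Rq_br2[where x="[sa, sb]" and y="[sb]"] by simp
  also have "Rq q [sa, sb, sa, sb, sa, sb] [sa, sa, sb, sa, sa, sb]" using Rq_br2[where x="[sa]" and y="[sa, sb]"] by simp
  finally show ?thesis .
qed

lemma fact_64: "Rq q [sb, sa, sa, sb, sa] [sa, sb, sa, sa, sb]"
proof -
  have "Rq q [sb, sa, sa, sb, sa] [sb, sa, sb, sa, sb]" using Rq_br1[where x="[sb, sa]" and y="[]"] by simp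
  also have "Rq q [sb, sa, sb, sa, sb] [sa, sb, sa, sa, sb]" using Rq_br2[where x="[]" and y="[sa, sb]"] by simp
  finally show ?thesis .
qed

lemma fact_65: "Rq q [sb, sa, sa, sb, sb] [sa, sa, sb, sb, sa]"
proof -
  have "Rq q [sb, sa, sa, sb, sb] [sa, sa, sa, sb, sa, sa, sb, sb]" using Rq_ins[where x="[]" and y="[sb, sa, sa, sb, sb]" and g=S1] by simp
  also have "Rq q [sa, sa, sa, sb, sa, sa, sb, sb] [sa, sa, sb, sa, sb, sa, sb, sb]" using Rq_br1[where x="[sa, sa]" and y="[sa, sb, sb]"] by simp
  also have "Rq q [sa, sa, sb, sa, sb, sa, sb, sb] [sa, sa, sb, sb, sa, sb, sb, sb]" using Rq_br1[where x="[sa, sa, sb]" and y="[sb, sb]"] by simp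
  also have "Rq q [sa, sa, sb, sb, sa, sb, sb, sb] [sa, sa, sb, sb, sa]" using Rq_del[where x="[sa, sa, sb, sb, sa]" and y="[]" and g=S2] by simp
  finally show ?thesis .
qed

lemma fact_66: "Rq q [sb, sa, sa, sb, sA] [sa, sa, sb, sa, sa, sb]"
proof -
  have "Rq q [sb, sa, sa, sb, sA] [sb, sa, sa, sb, sa, sa]" using Rq_invl[where x="[sb, sa, sa, sb]" and g=S1] by simp
  also have "Rq q [sb, sa, sa, sb, sa, sa] [sb, sa, sb, sa, sb, sa]" using Rq_br1[where x="[sb, sa]" and y="[sa]"] by simp
  also have "Rq q [sb, sa, sb, sa, sb, sa] [sa, sb, sa, sa, sb, sa]" using Rq_br2[where x="[]" and y="[sa, sb, sa]"] by simp
  also have "Rq q [sa, sb, sa, sa, sb, sa] [sa, sb, sa, sb, sa, sb]" using Rq_br1[where x="[sa, sb, sa]" and y="[]"] by simp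
  also have "Rq q [sa, sb, sa, sb, sa, sb] [sa, sa, sb, sa, sa, sb]" using Rq_br2[where x="[sa]" and y="[sa, sb]"] by simp
  finally show ?thesis .
qed

lemma fact_67: "Rq q [sb, sa, sa, sb, sB] [sb, sa, sa]"
proof -
  have "Rq q [sb, sa, sa, sb, sB] [sb, sa, sa, sb, sb, sb]" using Rq_invl[where x="[sb, sa, sa, sb]" and g=S2] by simp
  also have "Rq q [sb, sa, sa, sb, sb, sb] [sb, sa, sa]" using Rq_del[where x="[sb, sa, sa]" and y="[]" and g=S2] by simp
  finally show ?thesis .
qed

lemma fact_68: "Rq q [sb, sb, sa, sa, sa] [sb, sb]"
  using Rq_del[where x="[sb, sb]" and y="[]" and g=S1] by simp

lemma fact_69: "Rq q [sb, sb, sa, sa, sb] [sa, sb, sb, sa, sa]"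
proof -
  have "Rq q [sb, sb, sa, sa, sb] [sb, sb, sa, sa, sb, sa, sa, sa]" using Rq_ins[where x="[sb, sb, sa, sa, sb]" and y="[]" and g=S1] by simp
  also have "Rq q [sb, sb, sa, sa, sb, sa, sa, sa] [sb, sb, sa, sb, sa, sb, sa, sa]" using Rq_br1[where x="[sb, sb, sa]" and y="[sa, sa]"] by simp
  also have "Rq q [sb, sb, sa, sb, sa, sb, sa, sa] [sb, sb, sb, sa, sb, sb, sa, sa]" using Rq_br1[where x="[sb, sb]" and y="[sb, sa, sa]"] by simp
  also have "Rq q [sb, sb, sb, sa, sb, sb, sa, sa] [sa, sb, sb, sa, sa]" using Rq_del[where x="[]" and y="[sa, sb, sb, sa, sa]" and g=S2] by simp
  finally show ?thesis .
qed

lemma fact_70: "Rq q [sb, sb, sa, sa, sA] [sb, sb, sa]"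
proof -
  have "Rq q [sb, sb, sa, sa, sA] [sb, sb, sa, sa, sa, sa]" using Rq_invl[where x="[sb, sb, sa, sa]" and g=S1] by simp
  also have "Rq q [sb, sb, sa, sa, sa, sa] [sb, sb, sa]" using Rq_del[where x="[sb, sb]" and y="[sa]" and g=S1] by simp
  finally show ?thesis .
qed

lemma fact_71: "Rq q [sb, sb, sa, sa, sB] [sa, sa, sb, sb, sa, sa]"
proof -
  have "Rq q [sb, sb, sa, sa, sB] [sb, sb, sa, sa, sb, sb]" using Rq_invl[where x="[sb, sb, sa, sa]" and g=S2] by simp
  also have "Rq q [sb, sb, sa, sa, sb, sb] [sb, sa, sa, sa, sb, sa, sa, sb, sb]" using Rq_ins[where x="[sb]" and y="[sb, sa, sa, sb, sb]" and g=S1] by simp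
  also have "Rq q [sb, sa, sa, sa, sb, sa, sa, sb, sb] [sb, sa, sa, sb, sa, sb, sa, sb, sb]" using Rq_br1[where x="[sb, sa, sa]" and y="[sa, sb, sb]"] by simp
  also have "Rq q [sb, sa, sa, sb, sa, sb, sa, sb, sb] [sb, sa, sa, sb, sb, sa, sb, sb, sb]" using Rq_br1[where x="[sb, sa, sa, sb]" and y="[sb, sb]"] by simp
  also have "Rq q [sb, sa, sa, sb, sb, sa, sb, sb, sb] [sb, sa, sa, sb, sb, sa]" using Rq_del[where x="[sb, sa, sa, sb, sb, sa]" and y="[]" and g=S2] by simp
  also have "Rq q [sb, sa, sa, sb, sb, sa] [sa, sa, sa, sb, sa, sa, sb, sb, sa]" using Rq_ins[where x="[]" and y="[sb, sa, sa, sb, sb, sa]" and g=S1] by simp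
  also have "Rq q [sa, sa, sa, sb, sa, sa, sb, sb, sa] [sa, sa, sb, sa, sb, sa, sb, sb, sa]" using Rq_br1[where x="[sa, sa]" and y="[sa, sb, sb, sa]"] by simp
  also have "Rq q [sa, sa, sb, sa, sb, sa, sb, sb, sa] [sa, sa, sb, sb, sa, sb, sb, sb, sa]" using Rq_br1[where x="[sa, sa, sb]" and y="[sb, sb, sa]"] by simp
  also have "Rq q [sa, sa, sb, sb, sa, sb, sb, sb, sa] [sa, sa, sb, sb, sa, sa]" using Rq_del[where x="[sa, sa, sb, sb, sa]" and y="[sa]" and g=S2] by simp
  finally show ?thesis .
qed

lemma fact_72: "Rq q [sa, sa, sb, sa, sa, sa] [sa, sa, sb]"
  using Rq_del[where x="[sa, sa, sb]" and y="[]" and g=S1] by simp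

lemma fact_73: "Rq q [sa, sa, sb, sa, sa, sb] [sa, sa, sb, sa, sa, sb]"
  by (rule Rq_of_Q[OF quot_rel.refl])

lemma fact_74: "Rq q [sa, sa, sb, sa, sa, sA] [sa, sa, sb, sa]"
proof -
  have "Rq q [sa, sa, sb, sa, sa, sA] [sa, sa, sb, sa, sa, sa, sa]" using Rq_invl[where x="[sa, sa, sb, sa, sa]" and g=S1] by simp
  also have "Rq q [sa, sa, sb, sa, sa, sa, sa] [sa, sa, sb, sa]" using Rq_del[where x="[sa, sa, sb]" and y="[sa]" and g=S1] by simp
  finally show ?thesis .
qed

lemma fact_75: "Rq q [sa, sa, sb, sa, sa, sB] [sa, sb, sb, sa]"
proof -
  have "Rq q [sa, sa, sb, sa, sa, sB] [sa, sa, sb, sa, sa, sb, sb]" using Rq_invl[where x="[sa, sa, sb, sa, sa]" and g=S2] by simp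
  also have "Rq q [sa, sa, sb, sa, sa, sb, sb] [sa, sb, sa, sb, sa, sb, sb]" using Rq_br1[where x="[sa]" and y="[sa, sb, sb]"] by simp
  also have "Rq q [sa, sb, sa, sb, sa, sb, sb] [sa, sb, sb, sa, sb, sb, sb]" using Rq_br1[where x="[sa, sb]" and y="[sb, sb]"] by simp
  also have "Rq q [sa, sb, sb, sa, sb, sb, sb] [sa, sb, sb, sa]" using Rq_del[where x="[sa, sb, sb, sa]" and y="[]" and g=S2] by simp
  finally show ?thesis .
qed

lemma fact_76: "Rq q [sa, sa, sb, sb, sa, sa] [sa, sa, sb, sb, sa, sa]"
  by (rule Rq_of_Q[OF quot_rel.refl])

lemma fact_77: "Rq q [sa, sa, sb, sb, sa, sb] [sb, sa, sa]"
proof -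
  have "Rq q [sa, sa, sb, sb, sa, sb] [sa, sa, sb, sa, sb, sa]" using Rq_br2[where x="[sa, sa, sb]" and y="[]"] by simp
  also have "Rq q [sa, sa, sb, sa, sb, sa] [sa, sa, sa, sb, sa, sa]" using Rq_br2[where x="[sa, sa]" and y="[sa]"] by simp
  also have "Rq q [sa, sa, sa, sb, sa, sa] [sb, sa, sa]" using Rq_del[where x="[]" and y="[sb, sa, sa]" and g=S1] by simp
  finally show ?thesis .
qed

lemma fact_78: "Rq q [sa, sa, sb, sb, sa, sA] [sa, sa, sb, sb]"
proof -
  have "Rq q [sa, sa, sb, sb, sa, sA] [sa, sa, sb, sb, sa, sa, sa]" using Rq_invl[where x="[sa, sa, sb, sb, sa]" and g=S1] by simp
  also have "Rq q [sa, sa, sb, sb, sa, sa, sa] [sa, sa, sb, sb]" using Rq_del[where x="[sa, sa, sb, sb]" and y="[]" and g=S1] by simp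
  finally show ?thesis .
qed

lemma fact_79: "Rq q [sa, sa, sb, sb, sa, sB] [sb, sa, sa, sb]"
proof -
  have "Rq q [sa, sa, sb, sb, sa, sB] [sa, sa, sb, sb, sa, sb, sb]" using Rq_invl[where x="[sa, sa, sb, sb, sa]" and g=S2] by simp
  also have "Rq q [sa, sa, sb, sb, sa, sb, sb] [sa, sa, sb, sa, sb, sa, sb]" using Rq_br2[where x="[sa, sa, sb]" and y="[sb]"] by simp
  also have "Rq q [sa, sa, sb, sa, sb, sa, sb] [sa, sa, sa, sb, sa, sa, sb]" using Rq_br2[where x="[sa, sa]" and y="[sa, sb]"] by simp
  also have "Rq q [sa, sa, sa, sb, sa, sa, sb] [sb, sa, sa, sb]" using Rq_del[where x="[]" and y="[sb, sa, sa, sb]" and g=S1] by simp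
  finally show ?thesis .
qed

lemma fact_80: "Rq q [sa, sb, sa, sa, sb, sa] [sa, sa, sb, sa, sa, sb]"
proof -
  have "Rq q [sa, sb, sa, sa, sb, sa] [sa, sb, sa, sb, sa, sb]" using Rq_br1[where x="[sa, sb, sa]" and y="[]"] by simp
  also have "Rq q [sa, sb, sa, sb, sa, sb] [sa, sa, sb, sa, sa, sb]" using Rq_br2[where x="[sa]" and y="[sa, sb]"] by simp
  finally show ?thesis .
qed

lemma fact_81: "Rq q [sa, sb, sa, sa, sb, sb] [sb, sb, sa]"
proof -
  have "Rq q [sa, sb, sa, sa, sb, sb] [sb, sa, sb, sa, sb, sb]" using Rq_br1[where x="[]" and y="[sa, sb, sb]"] by simp
  also have "Rq q [sb, sa, sb, sa, sb, sb] [sb, sb, sa, sb, sb, sb]" using Rq_br1[where x="[sb]" and y="[sb, sb]"] by simp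
  also have "Rq q [sb, sb, sa, sb, sb, sb] [sb, sb, sa]" using Rq_del[where x="[sb, sb, sa]" and y="[]" and g=S2] by simp
  finally show ?thesis .
qed

lemma fact_82: "Rq q [sa, sb, sa, sa, sb, sA] [sb, sa, sa, sb]"
proof -
  have "Rq q [sa, sb, sa, sa, sb, sA] [sa, sb, sa, sa, sb, sa, sa]" using Rq_invl[where x="[sa, sb, sa, sa, sb]" and g=S1] by simp
  also have "Rq q [sa, sb, sa, sa, sb, sa, sa] [sb, sa, sb, sa, sb, sa, sa]" using Rq_br1[where x="[]" and y="[sa, sb, sa, sa]"] by simp
  also have "Rq q [sb, sa, sb, sa, sb, sa, sa] [sb, sa, sa, sb, sa, sa, sa]" using Rq_br2[where x="[sb, sa]" and y="[sa, sa]"] by simp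
  also have "Rq q [sb, sa, sa, sb, sa, sa, sa] [sb, sa, sa, sb]" using Rq_del[where x="[sb, sa, sa, sb]" and y="[]" and g=S1] by simp
  finally show ?thesis .
qed

lemma fact_83: "Rq q [sa, sb, sa, sa, sb, sB] [sa, sb, sa, sa]"
proof -
  have "Rq q [sa, sb, sa, sa, sb, sB] [sa, sb, sa, sa, sb, sb, sb]" using Rq_invl[where x="[sa, sb, sa, sa, sb]" and g=S2] by simp
  also have "Rq q [sa, sb, sa, sa, sb, sb, sb] [sa, sb, sa, sa]" using Rq_del[where x="[sa, sb, sa, sa]" and y="[]" and g=S2] by simp
  finally show ?thesis .
qed

lemma fact_84: "Rq q [sa, sb, sb, sa, sa, sa] [sa, sb, sb]"
  using Rq_del[where x="[sa, sb, sb]" and y="[]" and g=S1] by simp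

lemma fact_85: "Rq q [sa, sb, sb, sa, sa, sb] [sa, sa, sb, sb, sa, sa]"
proof -
  have "Rq q [sa, sb, sb, sa, sa, sb] [sa, sb, sb, sa, sa, sb, sa, sa, sa]" using Rq_ins[where x="[sa, sb, sb, sa, sa, sb]" and y="[]" and g=S1] by simp
  also have "Rq q [sa, sb, sb, sa, sa, sb, sa, sa, sa] [sa, sb, sb, sa, sb, sa, sb, sa, sa]" using Rq_br1[where x="[sa, sb, sb, sa]" and y="[sa, sa]"] by simp
  also have "Rq q [sa, sb, sb, sa, sb, sa, sb, sa, sa] [sa, sb, sb, sb, sa, sb, sb, sa, sa]" using Rq_br1[where x="[sa, sb, sb]" and y="[sb, sa, sa]"] by simp
  also have "Rq q [sa, sb, sb, sb, sa, sb, sb, sa, sa] [sa, sa, sb, sb, sa, sa]" using Rq_del[where x="[sa]" and y="[sa, sb, sb, sa, sa]" and g=S2] by simp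
  finally show ?thesis .
qed

lemma fact_86: "Rq q [sa, sb, sb, sa, sa, sA] [sa, sb, sb, sa]"
proof -
  have "Rq q [sa, sb, sb, sa, sa, sA] [sa, sb, sb, sa, sa, sa, sa]" using Rq_invl[where x="[sa, sb, sb, sa, sa]" and g=S1] by simp
  also have "Rq q [sa, sb, sb, sa, sa, sa, sa] [sa, sb, sb, sa]" using Rq_del[where x="[sa, sb, sb]" and y="[sa]" and g=S1] by simp
  finally show ?thesis .
qed

lemma fact_87: "Rq q [sa, sb, sb, sa, sa, sB] [sb, sb, sa, sa]"
proof -
  have "Rq q [sa, sb, sb, sa, sa, sB] [sa, sb, sb, sa, sa, sb, sb]" using Rq_invl[where x="[sa, sb, sb, sa, sa]" and g=S2] by simp
  also have "Rq q [sa, sb, sb, sa, sa, sb, sb] [sb, sb, sb, sa, sb, sb, sa, sa, sb, sb]" using Rq_ins[where x="[]" and y="[sa, sb, sb, sa, sa, sb, sb]" and g=S2] by simp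
  also have "Rq q [sb, sb, sb, sa, sb, sb, sa, sa, sb, sb] [sb, sb, sa, sb, sa, sb, sa, sa, sb, sb]" using Rq_br2[where x="[sb, sb]" and y="[sb, sa, sa, sb, sb]"] by simp
  also have "Rq q [sb, sb, sa, sb, sa, sb, sa, sa, sb, sb] [sb, sb, sa, sa, sb, sa, sa, sa, sb, sb]" using Rq_br2[where x="[sb, sb, sa]" and y="[sa, sa, sb, sb]"] by simp
  also have "Rq q [sb, sb, sa, sa, sb, sa, sa, sa, sb, sb] [sb, sb, sa, sa, sb, sb, sb]" using Rq_del[where x="[sb, sb, sa, sa, sb]" and y="[sb, sb]" and g=S1] by simp
  also have "Rq q [sb, sb, sa, sa, sb, sb, sb] [sb, sb, sa, sa]" using Rq_del[where x="[sb, sb, sa, sa]" and y="[]" and g=S2] by simp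
  finally show ?thesis .
qed

lemma fact_88: "Rq q [sa, sa, sb, sa, sa, sb, sa] [sb, sa, sa, sb]"
proof -
  have "Rq q [sa, sa, sb, sa, sa, sb, sa] [sa, sa, sb, sa, sb, sa, sb]" using Rq_br1[where x="[sa, sa, sb, sa]" and y="[]"] by simp
  also have "Rq q [sa, sa, sb, sa, sb, sa, sb] [sa, sa, sa, sb, sa, sa, sb]" using Rq_br2[where x="[sa, sa]" and y="[sa, sb]"] by simp
  also have "Rq q [sa, sa, sa, sb, sa, sa, sb] [sb, sa, sa, sb]" using Rq_del[where x="[]" and y="[sb, sa, sa, sb]" and g=S1] by simp
  finally show ?thesis .
qed

lemma fact_89: "Rq q [sa, sa, sb, sa, sa, sb, sb] [sa, sb, sb, sa]"
proof -
  have "Rq q [sa, sa, sb, sa, sa, sb, sb] [sa, sb, sa, sb, sa, sb, sb]" using Rq_br1[where x="[sa]" and y="[sa, sb, sb]"] by simp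
  also have "Rq q [sa, sb, sa, sb, sa, sb, sb] [sa, sb, sb, sa, sb, sb, sb]" using Rq_br1[where x="[sa, sb]" and y="[sb, sb]"] by simp
  also have "Rq q [sa, sb, sb, sa, sb, sb, sb] [sa, sb, sb, sa]" using Rq_del[where x="[sa, sb, sb, sa]" and y="[]" and g=S2] by simp
  finally show ?thesis .
qed

lemma fact_90: "Rq q [sa, sa, sb, sa, sa, sb, sA] [sa, sb, sa, sa, sb]"
proof -
  have "Rq q [sa, sa, sb, sa, sa, sb, sA] [sa, sa, sb, sa, sa, sb, sa, sa]" using Rq_invl[where x="[sa, sa, sb, sa, sa, sb]" and g=S1] by simp
  also have "Rq q [sa, sa, sb, sa, sa, sb, sa, sa] [sa, sb, sa, sb, sa, sb, sa, sa]" using Rq_br1[where x="[sa]" and y="[sa, sb, sa, sa]"] by simp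
  also have "Rq q [sa, sb, sa, sb, sa, sb, sa, sa] [sa, sb, sa, sa, sb, sa, sa, sa]" using Rq_br2[where x="[sa, sb, sa]" and y="[sa, sa]"] by simp
  also have "Rq q [sa, sb, sa, sa, sb, sa, sa, sa] [sa, sb, sa, sa, sb]" using Rq_del[where x="[sa, sb, sa, sa, sb]" and y="[]" and g=S1] by simp
  finally show ?thesis .
qed

lemma fact_91: "Rq q [sa, sa, sb, sa, sa, sb, sB] [sa, sa, sb, sa, sa]"
proof -
  have "Rq q [sa, sa, sb, sa, sa, sb, sB] [sa, sa, sb, sa, sa, sb, sb, sb]" using Rq_invl[where x="[sa, sa, sb, sa, sa, sb]" and g=S2] by simp
  also have "Rq q [sa, sa, sb, sa, sa, sb, sb, sb] [sa, sa, sb, sa, sa]" using Rq_del[where x="[sa, sa, sb, sa, sa]" and y="[]" and g=S2] by simp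
  finally show ?thesis .
qed

lemma fact_92: "Rq q [sa, sa, sb, sb, sa, sa, sa] [sa, sa, sb, sb]"
  using Rq_del[where x="[sa, sa, sb, sb]" and y="[]" and g=S1] by simp

lemma fact_93: "Rq q [sa, sa, sb, sb, sa, sa, sb] [sb, sb, sa, sa]"
proof -
  have "Rq q [sa, sa, sb, sb, sa, sa, sb] [sa, sa, sb, sb, sa, sa, sb, sa, sa, sa]" using Rq_ins[where x="[sa, sa, sb, sb, sa, sa, sb]" and y="[]" and g=S1] by simp
  also have "Rq q [sa, sa, sb, sb, sa, sa, sb, sa, sa, sa] [sa, sa, sb, sb, sa, sb, sa, sb, sa, sa]" using Rq_br1[where x="[sa, sa, sb, sb, sa]" and y="[sa, sa]"] by simp
  also have "Rq q [sa, sa, sb, sb, sa, sb, sa, sb, sa, sa] [sa, sa, sb, sb, sb, sa, sb, sb, sa, sa]" using Rq_br1[where x="[sa, sa, sb, sb]" and y="[sb, sa, sa]"] by simp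
  also have "Rq q [sa, sa, sb, sb, sb, sa, sb, sb, sa, sa] [sa, sa, sa, sb, sb, sa, sa]" using Rq_del[where x="[sa, sa]" and y="[sa, sb, sb, sa, sa]" and g=S2] by simp
  also have "Rq q [sa, sa, sa, sb, sb, sa, sa] [sb, sb, sa, sa]" using Rq_del[where x="[]" and y="[sb, sb, sa, sa]" and g=S1] by simp
  finally show ?thesis .
qed

lemma fact_94: "Rq q [sa, sa, sb, sb, sa, sa, sA] [sa, sa, sb, sb, sa]"
proof -
  have "Rq q [sa, sa, sb, sb, sa, sa, sA] [sa, sa, sb, sb, sa, sa, sa, sa]" using Rq_invl[where x="[sa, sa, sb, sb, sa, sa]" and g=S1] by simp
  also have "Rq q [sa, sa, sb, sb, sa, sa, sa, sa] [sa, sa, sb, sb, sa]" using Rq_del[where x="[sa, sa, sb, sb]" and y="[sa]" and g=S1] by simp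
  finally show ?thesis .
qed

lemma fact_95: "Rq q [sa, sa, sb, sb, sa, sa, sB] [sa, sb, sb, sa, sa]"
proof -
  have "Rq q [sa, sa, sb, sb, sa, sa, sB] [sa, sa, sb, sb, sa, sa, sb, sb]" using Rq_invl[where x="[sa, sa, sb, sb, sa, sa]" and g=S2] by simp
  also have "Rq q [sa, sa, sb, sb, sa, sa, sb, sb] [sa, sb, sb, sb, sa, sb, sb, sa, sa, sb, sb]" using Rq_ins[where x="[sa]" and y="[sa, sb, sb, sa, sa, sb, sb]" and g=S2] by simp
  also have "Rq q [sa, sb, sb, sb, sa, sb, sb, sa, sa, sb, sb] [sa, sb, sb, sa, sb, sa, sb, sa, sa, sb, sb]" using Rq_br2[where x="[sa, sb, sb]" and y="[sb, sa, sa, sb, sb]"] by simp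
  also have "Rq q [sa, sb, sb, sa, sb, sa, sb, sa, sa, sb, sb] [sa, sb, sb, sa, sa, sb, sa, sa, sa, sb, sb]" using Rq_br2[where x="[sa, sb, sb, sa]" and y="[sa, sa, sb, sb]"] by simp
  also have "Rq q [sa, sb, sb, sa, sa, sb, sa, sa, sa, sb, sb] [sa, sb, sb, sa, sa, sb, sb, sb]" using Rq_del[where x="[sa, sb, sb, sa, sa, sb]" and y="[sb, sb]" and g=S1] by simp
  also have "Rq q [sa, sb, sb, sa, sa, sb, sb, sb] [sa, sb, sb, sa, sa]" using Rq_del[where x="[sa, sb, sb, sa, sa]" and y="[]" and g=S2] by simp
  finally show ?thesis .
qed

lemma facts_sa: "m \<in> M24 \<Longrightarrow> Rq q (Tr m @ [sa]) (Tr (mmul3 m (1,1,0,1)))"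
  unfolding M24_def TL_def by (auto simp: Tr_def TL_def fact_0 fact_4 fact_8 fact_12 fact_16 fact_20 fact_24 fact_28 fact_32 fact_36 fact_40 fact_44 fact_48 fact_52 fact_56 fact_60 fact_64 fact_68 fact_72 fact_76 fact_80 fact_84 fact_88 fact_92)

lemma clos_sa: "m \<in> M24 \<Longrightarrow> mmul3 m (1,1,0,1) \<in> M24"
  unfolding M24_def TL_def by auto

lemma facts_sb: "m \<in> M24 \<Longrightarrow> Rq q (Tr m @ [sb]) (Tr (mmul3 m (1,0,2,1)))"
  unfolding M24_def TL_def by (auto simp: Tr_def TL_def fact_1 fact_5 fact_9 fact_13 fact_17 fact_21 fact_25 fact_29 fact_33 fact_37 fact_41 fact_45 fact_49 fact_53 fact_57 fact_61 fact_65 fact_69 fact_73 fact_77 fact_81 fact_85 fact_89 fact_93)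

lemma clos_sb: "m \<in> M24 \<Longrightarrow> mmul3 m (1,0,2,1) \<in> M24"
  unfolding M24_def TL_def by auto

lemma facts_sA: "m \<in> M24 \<Longrightarrow> Rq q (Tr m @ [sA]) (Tr (mmul3 m (1,2,0,1)))"
  unfolding M24_def TL_def by (auto simp: Tr_def TL_def fact_2 fact_6 fact_10 fact_14 fact_18 fact_22 fact_26 fact_30 fact_34 fact_38 fact_42 fact_46 fact_50 fact_54 fact_58 fact_62 fact_66 fact_70 fact_74 fact_78 fact_82 fact_86 fact_90 fact_94)

lemma clos_sA: "m \<in> M24 \<Longrightarrow> mmul3 m (1,2,0,1) \<in> M24"
  unfolding M24_def TL_def by auto

lemma facts_sB: "m \<in> M24 \<Longrightarrow> Rq q (Tr m @ [sB]) (Tr (mmul3 m (1,0,1,1)))"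
  unfolding M24_def TL_def by (auto simp: Tr_def TL_def fact_3 fact_7 fact_11 fact_15 fact_19 fact_23 fact_27 fact_31 fact_35 fact_39 fact_43 fact_47 fact_51 fact_55 fact_59 fact_63 fact_67 fact_71 fact_75 fact_79 fact_83 fact_87 fact_91 fact_95)

lemma clos_sB: "m \<in> M24 \<Longrightarrow> mmul3 m (1,0,1,1) \<in> M24"
  unfolding M24_def TL_def by auto

lemma facts_all: "m \<in> M24 \<Longrightarrow> Rq q (Tr m @ [x]) (Tr (mmul3 m (rho3_letter x)))"
  by (cases x; rename_tac g b; case_tac g; case_tac b) (simp_all add: facts_sa facts_sb facts_sA facts_sB)

lemma clos: "m \<in> M24 \<Longrightarrow> mmul3 m (rho3_letter x) \<in> M24"
  by (cases x; rename_tac g b; case_tac g; case_tac b) (simp_all add: clos_sa clos_sb clos_sA clos_sB)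

definition letters :: "letter list" where "letters = [sa, sA, sb, sB]"

definition Hf :: "nat \<Rightarrow> mat3 \<Rightarrow> letter \<Rightarrow> word" where
  "Hf q m x = (SOME h. Tq q h \<and> quot_rel q (Tr m @ [x]) (h @ Tr (mmul3 m (rho3_letter x))))"

lemma Hf: "m \<in> M24 \<Longrightarrow> Tq q (Hf q m x) \<and> quot_rel q (Tr m @ [x]) (Hf q m x @ Tr (mmul3 m (rho3_letter x)))"
proof -
  assume "m \<in> M24"
  then have "\<exists>h. Tq q h \<and> quot_rel q (Tr m @ [x]) (h @ Tr (mmul3 m (rho3_letter x)))"
    using facts_all unfolding Rq_def by blast
  then show ?thesis unfolding Hf_def by (rule someI_ex)
qed

definition Sl :: "nat \<Rightarrow> word list" where
  "Sl q = concat (map (\<lambda>m. map (Hf q m) letters) (map fst TL))"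

lemma concat_map_mem: "s \<in> set (concat (map (\<lambda>m. map (f m) L) K)) \<Longrightarrow> \<exists>m\<in>set K. \<exists>x. s = f m x"
  by auto

lemma Sl_Tq: "s \<in> set (Sl q) \<Longrightarrow> Tq q s"
proof -
  assume "s \<in> set (Sl q)"
  then have "\<exists>m\<in>M24. \<exists>x. s = Hf q m x" unfolding Sl_def M24_def
    by (rule concat_map_mem)
  then obtain m x where "m \<in> M24" "s = Hf q m x" by blast
  then show ?thesis using Hf by blast
qed

lemma Hf_in: "m \<in> M24 \<Longrightarrow> Hf q m x \<in> set (Sl q)"
proof -
  assume "m \<in> M24"
  moreover have "x \<in> set letters"
    by (cases x; rename_tac g b; case_tac g; case_tac b) (simp_all add: letters_def)
  ultimately show ?thesis unfolding Sl_def M24_def by auto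
qed

lemma tele: "m \<in> M24 \<Longrightarrow> \<exists>hs m'. set hs \<subseteq> set (Sl q) \<and> m' \<in> M24 \<and> quot_rel q (Tr m @ w) (concat hs @ Tr m')"
proof (induction w arbitrary: m)
  case Nil
  then show ?case using quot_rel.refl[of q "Tr m"] by (intro exI[of _ "[]"] exI[of _ m]) simp
next
  case (Cons x w)
  define m1 where "m1 = mmul3 m (rho3_letter x)"
  have m1: "m1 \<in> M24" using clos Cons.prems m1_def by simp
  obtain hs m' where hs: "set hs \<subseteq> set (Sl q)" "m' \<in> M24" "quot_rel q (Tr m1 @ w) (concat hs @ Tr m')"
    using Cons.IH[OF m1] by blast
  have "quot_rel q (Tr m @ [x]) (Hf q m x @ Tr m1)" using Hf Cons.prems m1_def by simp
  then have "quot_rel q ((Tr m @ [x]) @ w) ((Hf q m x @ Tr m1) @ w)" by (rule Q_cong_r)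
  also have "quot_rel q ((Hf q m x @ Tr m1) @ w) (Hf q m x @ concat hs @ Tr m')"
    using Q_cong_l[OF hs(3)] by simp
  finally have "quot_rel q (Tr m @ x # w) (concat (Hf q m x # hs) @ Tr m')" by simp
  moreover have "set (Hf q m x # hs) \<subseteq> set (Sl q)" using hs Hf_in Cons.prems by simp
  ultimately show ?case using hs(2) by blast
qed

fun P :: "word list \<Rightarrow> nat list \<Rightarrow> word" where
  "P [] es = []"
| "P (s # ss) es = pw s (hd es) @ P ss (tl es)"

lemma P_zero: "P Ss (replicate (length Ss) 0) = []"
  by (induction Ss) simp_all

lemma P_ins:
  assumes q: "q > 0" and T: "\<forall>s\<in>set Ss. Tq q s"
  shows "h \<in> set Ss \<Longrightarrow> length es = length Ss \<Longrightarrow> \<forall>e\<in>set es. e < q \<Longrightarrow>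
    \<exists>es'. length es' = length Ss \<and> (\<forall>e\<in>set es'. e < q) \<and> quot_rel q (h @ P Ss es) (P Ss es')"
  using T
proof (induction Ss arbitrary: es)
  case Nil then show ?case by simp
next
  case (Cons s Ss)
  obtain e es0 where es: "es = e # es0" using Cons.prems(2) by (cases es) auto
  show ?case
  proof (cases "h = s")
    case True
    have Th: "quot_rel q (pw h q) []" using Cons.prems(4) True by (simp add: Tq_def)
    have "h @ P (s # Ss) es = pw h (Suc e) @ P Ss es0" using True es by (simp add: pw_Suc)
    moreover have "quot_rel q (pw h (Suc e) @ P Ss es0) (pw h (Suc e mod q) @ P Ss es0)"
      by (rule Q_cong_r[OF Q_pw_mod[OF Th]])
    moreover have "pw h (Suc e mod q) @ P Ss es0 = P (s # Ss) ((Suc e mod q) # es0)" using True by simp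
    moreover have "\<forall>e\<in>set ((Suc e mod q) # es0). e < q" using Cons.prems(3) es q by simp
    moreover have "length ((Suc e mod q) # es0) = length (s # Ss)" using Cons.prems(2) es by simp
    ultimately show ?thesis by metis
  next
    case False
    then have hS: "h \<in> set Ss" using Cons.prems(1) by simp
    obtain es1 where es1: "length es1 = length Ss" "\<forall>e\<in>set es1. e < q" "quot_rel q (h @ P Ss es0) (P Ss es1)"
      using Cons.IH[OF hS, of es0] Cons.prems es by auto
    have rh: "rho3 h = (1,0,0,1)" using Cons.prems(4) hS by (simp add: Tq_def)
    have rs: "rho3 (pw s e) = (1,0,0,1)" using Cons.prems(4) by (simp add: Tq_def rho3_pw)
    have "quot_rel q (h @ P (s # Ss) es) ((h @ pw s e) @ P Ss es0)" using es by (simp add: quot_rel.refl)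
    also have "quot_rel q ((h @ pw s e) @ P Ss es0) ((pw s e @ h) @ P Ss es0)"
      by (rule Q_cong_r[OF Q_comm[OF rh rs]])
    also have "quot_rel q ((pw s e @ h) @ P Ss es0) (pw s e @ P Ss es1)"
      using Q_cong_l[OF es1(3)] by simp
    also have "pw s e @ P Ss es1 = P (s # Ss) (e # es1)" by simp
    finally show ?thesis using es1 Cons.prems(3) es by (intro exI[of _ "e # es1"]) auto
  qed
qed

lemma sort:
  assumes q: "q > 0" and T: "\<forall>s\<in>set Ss. Tq q s"
  shows "set hs \<subseteq> set Ss \<Longrightarrow> \<exists>es. length es = length Ss \<and> (\<forall>e\<in>set es. e < q) \<and> quot_rel q (concat hs) (P Ss es)"
proof (induction hs)
  case Nil
  show ?case using q P_zero[of Ss] quot_rel.refl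
    by (intro exI[of _ "replicate (length Ss) 0"]) simp
next
  case (Cons h hs)
  obtain es where es: "length es = length Ss" "\<forall>e\<in>set es. e < q" "quot_rel q (concat hs) (P Ss es)"
    using Cons by auto
  obtain es' where es': "length es' = length Ss" "\<forall>e\<in>set es'. e < q" "quot_rel q (h @ P Ss es) (P Ss es')"
    using P_ins[OF q T, of h es] Cons.prems es by auto
  have "quot_rel q (concat (h # hs)) (h @ P Ss es)" using Q_cong_l[OF es(3)] by simp
  also have "quot_rel q (h @ P Ss es) (P Ss es')" by (rule es'(3))
  finally show ?case using es' by blast
qed

lemma I_M24: "(1,0,0,1) \<in> M24" by (simp add: M24_def TL_def)
lemma Tr_I: "Tr (1,0,0,1) = []" by (simp add: Tr_def TL_def)

theorem proposition3p3:
  fixes q :: nat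
  assumes "q \<ge> 3"
  shows "finite (carrier (B3_quot q))"
proof -
  have q: "q > 0" using assms by simp
  define A where "A = {es. set es \<subseteq> {..<q} \<and> length es = length (Sl q)} \<times> M24"
  define F where "F = (\<lambda>(es, m). P (Sl q) es @ Tr m) ` A"
  have fA: "finite A" unfolding A_def M24_def
    by (intro finite_cartesian_product finite_lists_length_eq) simp_all
  have fF: "finite F" unfolding F_def using fA by simp
  have rep: "\<exists>f\<in>F. quot_rel q w f" for w
  proof -
    obtain hs m' where hs: "set hs \<subseteq> set (Sl q)" "m' \<in> M24" "quot_rel q (Tr (1,0,0,1) @ w) (concat hs @ Tr m')"
      using tele[OF I_M24] by blast
    obtain es where es: "length es = length (Sl q)" "\<forall>e\<in>set es. e < q" "quot_rel q (concat hs) (P (Sl q) es)"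
      using sort[OF q _ hs(1)] Sl_Tq by blast
    have "quot_rel q w (concat hs @ Tr m')" using hs(3) Tr_I by simp
    also have "quot_rel q (concat hs @ Tr m') (P (Sl q) es @ Tr m')" by (rule Q_cong_r[OF es(3)])
    finally have "quot_rel q w (P (Sl q) es @ Tr m')" .
    moreover have "P (Sl q) es @ Tr m' \<in> F" unfolding F_def A_def
      using es hs(2) by (intro image_eqI[of _ _ "(es, m')"]) auto
    ultimately show ?thesis by blast
  qed
  have "carrier (B3_quot q) \<subseteq> (\<lambda>f. quot_relation q `` {f}) ` F"
  proof
    fix X assume "X \<in> carrier (B3_quot q)"
    then obtain w where X: "X = quot_relation q `` {w}"
      unfolding B3_quot_def by (auto elim: quotientE)
    obtain f where f: "f \<in> F" "quot_rel q w f" using rep by blast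
    have "quot_relation q `` {w} = quot_relation q `` {f}"
      unfolding quot_relation_def using f(2) quot_rel.sym quot_rel.trans by blast
    then show "X \<in> (\<lambda>f. quot_relation q `` {f}) ` F" using X f(1) by blast
  qed
  then show ?thesis using fF finite_subset by blast
qed


end
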